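(* Let $\zeta_*\in(0,1]$, $\gamma_*\in(0,1]$, and $\nu_*=(1-\zeta_* )\delta_0+\zeta_*\delta_{\gamma_*}$. Then \[ \inf_{\nu:\ \nu((0,\infty))<\frac12\zeta_*}\|F_\nu-F_{\nu_*}\|_\infty\ \ge\ 0.01\,\gamma_*^2\zeta_*, \] where the infimum is over probability distributions $\nu$ on $\mathbb{R}$.
   Context: $\delta_x$ denotes the point mass at $x$. For a probability distribution $\nu$ on $\mathbb{R}$, $F_\nu(t):=\mathbb{P}_{\mu\sim\nu,\,X\sim\mathcal{N}(\mu,1)}(X\le t)$, and $\|\cdot\|_\infty$ is the sup norm over $t\in\mathbb{R}$. *)

theory Defs
  imports "HOL-Probability.Probability"
begin

text \<open>CDF of the Gaussian location mixture: F_nu(t) = P(X <= t) where mu ~ nu and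
  X ~ N(mu,1), i.e. the nu-average of the N(mu,1) probability of (-infinity, t].\<close>
definition mixture_cdf :: "real measure \<Rightarrow> real \<Rightarrow> real" where
  "mixture_cdf \<nu> t =
     (\<integral>\<mu>. measure (density lborel (normal_density \<mu> 1)) {..t} \<partial>\<nu>)"

definition cdf_sup_dist :: "real measure \<Rightarrow> real measure \<Rightarrow> real" where
  "cdf_sup_dist \<nu> \<nu>' = (SUP t. \<bar>mixture_cdf \<nu> t - mixture_cdf \<nu>' t\<bar>)"

text \<open>The two-point distribution (1 - zeta) delta_0 + zeta delta_gamma.\<close>
definition two_point :: "real \<Rightarrow> real \<Rightarrow> real measure" where
  "two_point \<zeta> \<gamma> = measure_pmf (map_pmf (\<lambda>b. if b then \<gamma> else 0) (bernoulli_pmf \<zeta>))"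

end

theory Submission
  imports Defs
begin

definition P :: "real \<Rightarrow> real" where
  "P t = measure (density lborel (normal_density 0 1)) {..t}"

lemma shift_measure:
  "measure (density lborel (normal_density \<mu> 1)) {..t} = P (t - \<mu>)"
proof -
  have "emeasure (density lborel (normal_density \<mu> 1)) {..t}
      = (\<integral>\<^sup>+x. ennreal (normal_density \<mu> 1 x) * indicator {..t} x \<partial>lborel)"
    by (simp add: emeasure_density)
  also have "\<dots> = (\<integral>\<^sup>+x. ennreal (normal_density \<mu> 1 (\<mu> + 1 * x)) * indicator {..t} (\<mu> + 1 * x) \<partial>lborel)"
    by (subst nn_integral_real_affine[where c=1 and t=\<mu>]) auto
  also have "\<dots> = (\<integral>\<^sup>+x. ennreal (normal_density 0 1 x) * indicator {..t-\<mu>} x \<partial>lborel)"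
    by (intro nn_integral_cong) (auto simp: normal_density_def indicator_def)
  also have "\<dots> = emeasure (density lborel (normal_density 0 1)) {..t-\<mu>}"
    by (simp add: emeasure_density)
  finally show ?thesis unfolding P_def measure_def by simp
qed

lemma cont_phi: "continuous_on S (normal_density 0 1)"
proof -
  have "normal_density 0 1 = (\<lambda>x. 1/sqrt(2*pi) * exp (- (x^2) / 2))"
    by (rule ext) (simp add: std_normal_density_def)
  then show ?thesis by (auto intro!: continuous_intros)
qed

lemma P_diff:
  assumes "x \<le> y"
  shows "P y - P x = integral {x..y} (normal_density 0 1)"
proof -
  interpret N: prob_space "density lborel (normal_density 0 1)"
    by (rule prob_space_normal_density) simp
  have "{..y} = {..x} \<union> {x<..y}" using assms by auto
  hence Py: "P y = P x + measure (density lborel (normal_density 0 1)) {x<..y}"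
    unfolding P_def by (metis N.finite_measure_Union atMost_borel greaterThanAtMost_borel sets_density sets_lborel disjoint_iff greaterThanAtMost_iff atMost_iff not_le)
  have int: "(normal_density 0 1 has_integral integral {x..y} (normal_density 0 1)) {x..y}"
    using integrable_continuous_real[OF cont_phi] by (simp add: integrable_integral)
  have "(normal_density 0 1 has_integral integral {x..y} (normal_density 0 1)) {x<..y}"
    using int by (subst has_integral_spike_set_eq[where T="{x..y}"]) (auto intro: negligible_subset[of "{x}"])
  hence int2: "((\<lambda>z. indicator {x<..y} z * normal_density 0 1 z) has_integral integral {x..y} (normal_density 0 1)) UNIV"
  proof -
    have eq: "(\<lambda>z. indicator {x<..y} z * normal_density 0 1 z) = (\<lambda>z. if z \<in> {x<..y} then normal_density 0 1 z else 0)"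
      by (auto simp: indicator_def)
    show "(normal_density 0 1 has_integral integral {x..y} (normal_density 0 1)) {x<..y} \<Longrightarrow> ?thesis"
      by (simp only: eq has_integral_restrict_UNIV)
  qed
  have nn: "0 \<le> integral {x..y} (normal_density 0 1)"
    by (rule integral_nonneg[OF integrable_continuous_real[OF cont_phi]]) auto
  have "emeasure (density lborel (normal_density 0 1)) {x<..y}
      = (\<integral>\<^sup>+z. ennreal (normal_density 0 1 z) * indicator {x<..y} z \<partial>lborel)"
    by (simp add: emeasure_density)
  also have "\<dots> = (\<integral>\<^sup>+z. ennreal (indicator {x<..y} z * normal_density 0 1 z) \<partial>lborel)"
    by (intro nn_integral_cong) (auto simp: indicator_def)
  also have "\<dots> = ennreal (integral {x..y} (normal_density 0 1))"
    by (rule nn_integral_has_integral_lborel[OF _ _ int2]) auto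
  finally have "measure (density lborel (normal_density 0 1)) {x<..y} = integral {x..y} (normal_density 0 1)"
    unfolding measure_def using nn by simp
  with Py show ?thesis by simp
qed

lemma P_deriv: "(P has_real_derivative normal_density 0 1 x) (at x)"
proof -
  have "((\<lambda>u. P (x-1) + integral {x-1..u} (normal_density 0 1)) has_real_derivative normal_density 0 1 x) (at x within {x-1..x+1})"
    by (rule DERIV_cong[OF DERIV_add[OF DERIV_const integral_has_real_derivative[OF cont_phi]]]) auto
  hence d: "((\<lambda>u. P (x-1) + integral {x-1..u} (normal_density 0 1)) has_real_derivative normal_density 0 1 x) (at x)"
    by (subst (asm) at_within_interior) auto
  show ?thesis
    by (rule has_field_derivative_transform_within_open[OF d, of "{x-1<..<x+1}"]) (auto simp: P_diff[of "x-1", symmetric])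
qed

definition hh :: "real \<Rightarrow> real \<Rightarrow> real" where
  "hh g m = P (g + 1 - m) - P (g - 1 - m)"

lemma hh_deriv: "(hh g has_real_derivative (normal_density 0 1 (g - 1 - m) - normal_density 0 1 (g + 1 - m))) (at m)"
proof -
  have a: "((\<lambda>m. P (g + 1 - m)) has_real_derivative normal_density 0 1 (g + 1 - m) * (-1)) (at m)"
    by (rule DERIV_chain2[OF P_deriv]) (auto intro!: derivative_eq_intros)
  have b: "((\<lambda>m. P (g - 1 - m)) has_real_derivative normal_density 0 1 (g - 1 - m) * (-1)) (at m)"
    by (rule DERIV_chain2[OF P_deriv]) (auto intro!: derivative_eq_intros)
  show ?thesis unfolding hh_def[abs_def] using DERIV_diff[OF a b] by simp
qed

lemma phi_mono: "a^2 \<le> b^2 \<Longrightarrow> normal_density 0 1 b \<le> normal_density 0 1 a"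
  by (simp add: std_normal_density_def divide_right_mono)

lemma phi_gap:
  assumes "0 \<le> v" "v \<le> 1"
  shows "0.08 * v \<le> normal_density 0 1 (v - 1) - normal_density 0 1 (v + 1)"
proof -
  define E where "E = exp (- ((v-1)^2) / 2)"
  have "exp (- 1 / 2) \<le> E" proof -
    have "(1-v)*(1-v) \<le> 1*1" using assms by (intro mult_mono) auto
    then show ?thesis unfolding E_def by (simp add: power2_eq_square algebra_simps)
  qed
  moreover have "1 + (- 1/2) \<le> exp (- 1 / 2 :: real)" using exp_ge_add_one_self[of "-1/2::real"] by simp
  ultimately have E: "1/2 \<le> E" by simp
  have "1 + 2 * v \<le> exp (2 * v)" using exp_ge_add_one_self[of "2 * v"] by simp
  hence "exp (-(2 * v)) \<le> 1 / (1 + 2 * v)" using assms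
    by (simp add: exp_minus divide_simps)
  also have "1 / (1 + 2 * v) \<le> 1 - 2 * v/3" using assms by (simp add: divide_simps) (simp add: algebra_simps power2_eq_square mult_left_le)
  finally have X: "2 * v/3 \<le> 1 - exp (-(2 * v))" by simp
  have "sqrt (2*pi) \<le> sqrt 9" using pi_less_4 by (intro real_sqrt_le_mono) simp
  hence C: "1/3 \<le> 1 / sqrt (2*pi)" by (simp add: divide_simps)
  have ex: "exp (- ((v+1)^2) / 2) = E * exp (-(2 * v))"
    unfolding E_def mult_exp_exp by (rule arg_cong[where f=exp]) (simp add: power2_eq_square field_simps)
  have "normal_density 0 1 (v - 1) - normal_density 0 1 (v + 1) = 1 / sqrt (2*pi) * (E * (1 - exp (-(2 * v))))"
    using ex by (simp add: std_normal_density_def E_def algebra_simps)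
  also have "\<dots> \<ge> 1/3 * (1/2 * (2 * v/3))"
    using C E X assms by (intro mult_mono) auto
  finally have "v/9 \<le> normal_density 0 1 (v - 1) - normal_density 0 1 (v + 1)" by simp
  then show ?thesis using assms by (simp add: power2_eq_square)
qed


lemma hh_sign: "(g - 1 - (x::real))^2 \<le> (g + 1 - x)^2 \<longleftrightarrow> x \<le> g"
proof -
  have "(g + 1 - x)^2 - (g - 1 - x)^2 = 4 * (g - x)" by (simp add: power2_eq_square algebra_simps)
  thus ?thesis by auto
qed

lemma hh_le0:
  assumes "m \<le> 0" "0 \<le> g"
  shows "hh g m \<le> hh g 0"
proof (rule DERIV_nonneg_imp_nondecreasing[OF assms(1)])
  fix x assume "m \<le> x" "x \<le> 0"
  hence "x \<le> g" using assms by simp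
  thus "\<exists>y. DERIV (hh g) x :> y \<and> y \<ge> 0"
  proof (intro exI conjI)
    show "DERIV (hh g) x :> (normal_density 0 1 (g - 1 - x) - normal_density 0 1 (g + 1 - x))" by (rule hh_deriv)
    have "(g - 1 - x)^2 \<le> (g + 1 - x)^2" using hh_sign \<open>x \<le> g\<close> by blast
    then show "0 \<le> normal_density 0 1 (g - 1 - x) - normal_density 0 1 (g + 1 - x)" using phi_mono by simp
  qed
qed

lemma hh_le_max: "hh g m \<le> hh g g"
proof (cases "m \<le> g")
  case True
  show ?thesis
  proof (rule DERIV_nonneg_imp_nondecreasing[OF True])
    fix x assume "m \<le> x" "x \<le> g"
    thus "\<exists>y. DERIV (hh g) x :> y \<and> y \<ge> 0"
    proof (intro exI conjI)
    show "DERIV (hh g) x :> (normal_density 0 1 (g - 1 - x) - normal_density 0 1 (g + 1 - x))" by (rule hh_deriv)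
    have "(g - 1 - x)^2 \<le> (g + 1 - x)^2" using hh_sign \<open>x \<le> g\<close> by blast
    then show "0 \<le> normal_density 0 1 (g - 1 - x) - normal_density 0 1 (g + 1 - x)" using phi_mono by simp
  qed
  qed
next
  case False
  hence le: "g \<le> m" by simp
  show ?thesis
  proof (rule DERIV_nonpos_imp_nonincreasing[OF le])
    fix x assume "g \<le> x" "x \<le> m"
    hence "(g + 1 - x)^2 \<le> (g - 1 - x)^2" by (simp add: power2_eq_square algebra_simps)
    thus "\<exists>y. DERIV (hh g) x :> y \<and> y \<le> 0"
    proof (intro exI conjI)
      show "DERIV (hh g) x :> (normal_density 0 1 (g - 1 - x) - normal_density 0 1 (g + 1 - x))" by (rule hh_deriv)
      show "normal_density 0 1 (g - 1 - x) - normal_density 0 1 (g + 1 - x) \<le> 0" using phi_mono \<open>(g + 1 - x)^2 \<le> (g - 1 - x)^2\<close> by simp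
    qed
  qed
qed

lemma hh_gap:
  assumes "0 < g" "g \<le> 1"
  shows "hh g 0 + 0.04 * g^2 \<le> hh g g"
proof -
  define k where "k = (\<lambda>u. hh g u + 0.04 * (g - u)^2)"
  have "k 0 \<le> k g"
  proof (rule DERIV_nonneg_imp_nondecreasing[of 0 g k])
    show "0 \<le> g" using assms by simp
    fix x assume x: "0 \<le> x" "x \<le> g"
    have d: "DERIV k x :> (normal_density 0 1 (g - 1 - x) - normal_density 0 1 (g + 1 - x)) + 0.04 * (2 * (g - x) * (-1))"
      unfolding k_def using hh_deriv[of g x] by (auto intro!: derivative_eq_intros)
    have "0.08 * (g - x) \<le> normal_density 0 1 ((g - x) - 1) - normal_density 0 1 ((g - x) + 1)"
      using x assms by (intro phi_gap) auto
    hence "0 \<le> (normal_density 0 1 (g - 1 - x) - normal_density 0 1 (g + 1 - x)) + 0.04 * (2 * (g - x) * (-1))"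
      by (simp add: algebra_simps diff_divide_distrib)
    with d show "\<exists>y. DERIV k x :> y \<and> y \<ge> 0" by blast
  qed
  thus ?thesis by (simp add: k_def)
qed

lemma P_bounds: "0 \<le> P t" "P t \<le> 1"
proof -
  interpret N: prob_space "density lborel (normal_density 0 1)"
    by (rule prob_space_normal_density) simp
  show "0 \<le> P t" "P t \<le> 1" unfolding P_def by auto
qed

lemma P_cont: "continuous_on UNIV P"
  using P_deriv by (meson DERIV_isCont continuous_at_imp_continuous_on)

lemma P_meas[measurable]: "P \<in> borel_measurable borel"
  by (rule borel_measurable_continuous_onI[OF P_cont])


lemma mix_eq: "mixture_cdf M t = (\<integral>\<mu>. P (t - \<mu>) \<partial>M)"
  unfolding mixture_cdf_def by (simp add: shift_measure)

lemma mix_two: "0 \<le> z \<Longrightarrow> z \<le> 1 \<Longrightarrow> mixture_cdf (two_point z g) t = P (t - g) * z + P t * (1 - z)"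
  unfolding mix_eq two_point_def by simp

theorem lemma5:
  fixes \<zeta> \<gamma> :: real
  assumes "0 < \<zeta>" "\<zeta> \<le> 1" "0 < \<gamma>" "\<gamma> \<le> 1"
  shows "\<forall>\<nu>::real measure. prob_space \<nu> \<and> sets \<nu> = sets borel \<and>
           measure \<nu> {0<..} < \<zeta> / 2 \<longrightarrow>
           cdf_sup_dist \<nu> (two_point \<zeta> \<gamma>) \<ge> 0.01 * \<gamma>^2 * \<zeta>"
proof (intro allI impI, elim conjE)
  fix \<nu> :: "real measure"
  assume ps: "prob_space \<nu>" and sets: "sets \<nu> = sets borel" and p: "measure \<nu> {0<..} < \<zeta> / 2"
  interpret prob_space \<nu> by (rule ps)
  have meas: "(\<lambda>\<mu>. P (t - \<mu>)) \<in> borel_measurable \<nu>" for t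
    by (subst measurable_cong_sets[OF sets refl]) measurable
  have intP: "integrable \<nu> (\<lambda>\<mu>. P (t - \<mu>))" for t
    by (rule integrable_const_bound[where B=1]) (auto simp: P_bounds meas)
  have mix_bd: "0 \<le> mixture_cdf \<nu> t \<and> mixture_cdf \<nu> t \<le> 1" for t
  proof -
    have "(\<integral>\<mu>. P (t - \<mu>) \<partial>\<nu>) \<le> (\<integral>\<mu>. 1 \<partial>\<nu>)"
      by (rule integral_mono[OF intP]) (auto simp: P_bounds)
    moreover have "0 \<le> (\<integral>\<mu>. P (t - \<mu>) \<partial>\<nu>)" by (rule Bochner_Integration.integral_nonneg) (auto simp: P_bounds)
    ultimately show ?thesis by (simp add: mix_eq prob_space)
  qed
  let ?D = "\<lambda>t. \<bar>mixture_cdf \<nu> t - mixture_cdf (two_point \<zeta> \<gamma>) t\<bar>"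
  have Dbd: "?D t \<le> 2" for t
    using mix_bd[of t] mix_two[of \<zeta> \<gamma> t] assms P_bounds[of t] P_bounds[of "t - \<gamma>"]
    by (auto simp: abs_le_iff) (smt (verit) mult_left_le mult_nonneg_nonneg)+
  have bdd: "bdd_above (range ?D)" by (rule bdd_aboveI2[where M=2]) (rule Dbd)
  have sp: "space \<nu> = UNIV" using sets_eq_imp_space_eq[OF sets] by simp
  have set0: "{0<..} \<in> sets \<nu>" using sets by simp
  define h0 where "h0 = hh \<gamma> 0"
  define H where "H = hh \<gamma> \<gamma>"
  define p where "p = measure \<nu> {0<..}"
  have A: "mixture_cdf \<nu> (\<gamma> + 1) - mixture_cdf \<nu> (\<gamma> - 1) = (\<integral>\<mu>. hh \<gamma> \<mu> \<partial>\<nu>)"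
    unfolding mix_eq hh_def by (rule Bochner_Integration.integral_diff[symmetric, OF intP intP])
  have pt: "hh \<gamma> \<mu> \<le> h0 + (H - h0) * indicator {0<..} \<mu>" for \<mu>
    using hh_le0[of \<mu> \<gamma>] hh_le_max[of \<gamma> \<mu>] assms unfolding h0_def H_def
    by (auto simp: indicator_def)
  have intind: "integrable \<nu> (\<lambda>\<mu>. (H - h0) * indicator {0<..} \<mu>)"
    using set0 by (intro integrable_mult_right integrable_real_indicator) (auto simp: less_top[symmetric])
  have "(\<integral>\<mu>. hh \<gamma> \<mu> \<partial>\<nu>) \<le> (\<integral>\<mu>. h0 + (H - h0) * indicator {0<..} \<mu> \<partial>\<nu>)"
  proof (rule integral_mono)
    show "integrable \<nu> (hh \<gamma>)" unfolding hh_def[abs_def] by (intro Bochner_Integration.integrable_diff intP)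
    show "integrable \<nu> (\<lambda>\<mu>. h0 + (H - h0) * indicator {0<..} \<mu>)"
      using intind by (intro Bochner_Integration.integrable_add) auto
  qed (rule pt)
  also have "\<dots> = h0 + (H - h0) * p"
    using intind set0 by (subst Bochner_Integration.integral_add) (auto simp: p_def sp prob_space[unfolded sp])
  finally have Ale: "mixture_cdf \<nu> (\<gamma> + 1) - mixture_cdf \<nu> (\<gamma> - 1) \<le> h0 + (H - h0) * p"
    using A by simp
  have B: "mixture_cdf (two_point \<zeta> \<gamma>) (\<gamma> + 1) - mixture_cdf (two_point \<zeta> \<gamma>) (\<gamma> - 1) = h0 + (H - h0) * \<zeta>"
    using assms by (simp add: mix_two h0_def H_def hh_def algebra_simps)
  have gap: "h0 + 0.04 * \<gamma>^2 \<le> H" using hh_gap[OF assms(3,4)] by (simp add: h0_def H_def)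
  have hle: "h0 \<le> H" using gap zero_le_power2[of \<gamma>] by (simp add: power2_eq_square) (smt (verit) zero_le_square divide_nonneg_pos)
  have key: "0.02 * \<gamma>^2 * \<zeta> \<le> ?D (\<gamma> - 1) + ?D (\<gamma> + 1)"
  proof -
    have "(H - h0) * p \<le> (H - h0) * (\<zeta> / 2)"
      using hle p unfolding p_def by (intro mult_left_mono) auto
    moreover have "0.04 * \<gamma>^2 * (\<zeta> / 2) \<le> (H - h0) * (\<zeta> / 2)"
      using gap assms by (intro mult_right_mono) auto
    ultimately have "0.02 * \<gamma>^2 * \<zeta> \<le> (mixture_cdf (two_point \<zeta> \<gamma>) (\<gamma> + 1) - mixture_cdf (two_point \<zeta> \<gamma>) (\<gamma> - 1))
        - (mixture_cdf \<nu> (\<gamma> + 1) - mixture_cdf \<nu> (\<gamma> - 1))"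
      using Ale B by (simp add: algebra_simps)
    then show ?thesis by linarith
  qed
  have "0.01 * \<gamma>^2 * \<zeta> \<le> ?D (\<gamma> - 1) \<or> 0.01 * \<gamma>^2 * \<zeta> \<le> ?D (\<gamma> + 1)"
    using key by linarith
  thus "0.01 * \<gamma>^2 * \<zeta> \<le> cdf_sup_dist \<nu> (two_point \<zeta> \<gamma>)"
    unfolding cdf_sup_dist_def
    using cSUP_upper2[OF bdd UNIV_I] by blast
qed

end
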